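(* Let $K \geq 1$ be an integer. Let $X$ be uniformly distributed on $[0,1)$, and let $K-1$ thresholds be drawn independently of each other and of $X$, each uniformly distributed on $[0,1)$; denote them in ascending order by $a_1 \leq a_2 \leq \cdots \leq a_{K-1}$, and set $a_0 = 0$, $a_K = 1$. Define the lossy encoder $\alpha:[0,1) \to \{1,2,\ldots,K\}$ by $\alpha(x) = k$ for $x \in [a_{k-1}, a_k)$, and the decoder $\beta:\{1,\ldots,K\} \to [0,1)$ by $\beta(k) = \tfrac{1}{2}(a_{k-1}+a_k)$. Then the mean-squared error, averaged over both $X$ and the random thresholds, is $$D = \mathbb{E}\big[(X - \beta(\alpha(X)))^2\big] = \frac{1}{2(K+1)(K+2)}.$$ *)

theory Defs
  imports "HOL-Probability.Probability"
begin

definition unif01 :: "real measure" where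
  "unif01 = uniform_measure lborel {0..<1}"

definition thr :: "nat \<Rightarrow> (nat \<Rightarrow> real) \<Rightarrow> nat \<Rightarrow> real" where
  "thr K t k = (if k = 0 then 0 else if k \<ge> K then 1
                else sort (map t [0..<K-1]) ! (k - 1))"

definition encoder :: "nat \<Rightarrow> (nat \<Rightarrow> real) \<Rightarrow> real \<Rightarrow> nat" where
  "encoder K t x = (THE k. k \<in> {1..K} \<and> thr K t (k - 1) \<le> x \<and> x < thr K t k)"

definition decoder :: "nat \<Rightarrow> (nat \<Rightarrow> real) \<Rightarrow> nat \<Rightarrow> real" where
  "decoder K t k = (thr K t (k - 1) + thr K t k) / 2"

end

theory Submission
  imports Defs
begin

lemma sets_unif01[measurable_cong]: "sets unif01 = sets borel"
  unfolding unif01_def by simp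
lemma space_unif01[simp]: "space unif01 = UNIV"
  unfolding unif01_def by simp
lemma prob_unif01: "prob_space unif01"
  unfolding unif01_def by (rule prob_space_uniform_measure) auto

interpretation U: prob_space unif01 by (rule prob_unif01)
interpretation PP: product_sigma_finite "\<lambda>_::nat. unif01"
  by unfold_locales

lemma prob_PM: "prob_space (\<Pi>\<^sub>M i\<in>I. unif01)"
  by (intro prob_space_PiM prob_unif01)

abbreviation PM :: "nat \<Rightarrow> (nat \<Rightarrow> real) measure" where
  "PM n \<equiv> (\<Pi>\<^sub>M i\<in>{..<n}. unif01)"

lemma comp_meas[measurable]: "i < n \<Longrightarrow> (\<lambda>t. t i) \<in> borel_measurable (PM n)"
  using measurable_component_singleton[of i "{..<n}" "\<lambda>_. unif01"]
  by (simp add: measurable_cong_sets[OF refl sets_unif01[symmetric]])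

lemma insort_nth:
  fixes y :: real
  assumes "sorted xs" "j \<le> length xs"
  shows "insort y xs ! j = (if j = 0 then (if xs = [] then y else min (xs!0) y)
     else if j = length xs then max (xs!(j-1)) y else min (xs!j) (max (xs!(j-1)) y))"
  using assms
proof (induction xs arbitrary: j)
  case Nil
  then show ?case by simp
next
  case (Cons x xs)
  show ?case
  proof (cases j)
    case 0
    then show ?thesis by auto
  next
    case (Suc i)
    show ?thesis
    proof (cases "y \<le> x")
      case True
      have a: "x \<le> (x#xs)!i" using sorted_nth_mono[OF Cons.prems(1), of 0 i] Cons.prems Suc by simp
      have b: "i < length xs \<Longrightarrow> (x#xs)!i \<le> (x#xs)!(Suc i)"
        using sorted_nth_mono[OF Cons.prems(1), of i "Suc i"] by simp
      have m: "max ((x#xs)!i) y = (x#xs)!i" using a True by simp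
      have e: "insort y (x#xs) ! j = (x#xs)!i" using True Suc by simp
      show ?thesis
      proof (cases "j = length (x#xs)")
        case True then show ?thesis using e m Suc by simp
      next
        case False
        then have "i < length xs" using Cons.prems Suc by simp
        then show ?thesis using e m Suc b False by (simp add: min_def)
      qed
    next
      case False
      have IH: "insort y xs ! i = (if i = 0 then (if xs = [] then y else min (xs!0) y)
     else if i = length xs then max (xs!(i-1)) y else min (xs!i) (max (xs!(i-1)) y))"
        using Cons Suc by auto
      have e: "insort y (x#xs) ! j = insort y xs ! i" using False Suc by simp
      show ?thesis
      proof (cases i)
        case 0
        then show ?thesis using e IH False Suc by (auto simp: max_def min_def)
      next
        case (Suc i')
        then show ?thesis using e IH \<open>j = Suc i\<close> by (auto simp: nth_Cons')
      qed
    qed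
  qed
qed

definition sl :: "nat \<Rightarrow> (nat \<Rightarrow> real) \<Rightarrow> real list" where
  "sl n t = sort (map t [0..<n])"

lemma sl_Suc: "sl (Suc n) t = insort (t n) (sl n t)"
  unfolding sl_def by (rule properties_for_sort) (auto simp: sorted_insort)

lemma sl_len[simp]: "length (sl n t) = n" by (simp add: sl_def)
lemma sl_Nil[simp]: "sl n t = [] \<longleftrightarrow> n = 0"
  by (metis length_0_conv sl_len)
lemma sl_sorted: "sorted (sl n t)" by (simp add: sl_def)
lemma sl_set: "set (sl n t) = t ` {..<n}" by (auto simp: sl_def)

lemma sl_meas: "n \<le> N \<Longrightarrow> j < n \<Longrightarrow> (\<lambda>t. sl n t ! j) \<in> borel_measurable (PM N)"
proof (induction n arbitrary: j)
  case 0
  then show ?case by simp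
next
  case (Suc n)
  have eq: "(\<lambda>t. sl (Suc n) t ! j) = (\<lambda>t. (if j = 0 then (if n = 0 then t n else min (sl n t!0) (t n))
     else if j = n then max (sl n t!(j-1)) (t n) else min (sl n t!j) (max (sl n t!(j-1)) (t n))))"
    using Suc.prems by (auto simp: sl_Suc insort_nth sl_sorted)
  have m1: "(\<lambda>t. t n) \<in> borel_measurable (PM N)" using Suc.prems by simp
  show ?case
  proof (cases "j = 0")
    case True
    then show ?thesis unfolding eq using Suc.IH[of 0] Suc.prems m1 by (cases "n = 0") auto
  next
    case False
    have h1: "(\<lambda>t. sl n t ! (j-1)) \<in> borel_measurable (PM N)" using Suc False by auto
    show ?thesis
    proof (cases "j = n")
      case True
      then show ?thesis unfolding eq using h1 m1 False by simp
    next
      case F2: False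
      have h2: "(\<lambda>t. sl n t ! j) \<in> borel_measurable (PM N)" using Suc F2 by auto
      show ?thesis unfolding eq using h1 h2 m1 False F2 by simp
    qed
  qed
qed

lemma thr_sl: "thr K t i = (if i = 0 then 0 else if K \<le> i then 1 else sl (K-1) t ! (i-1))"
  unfolding thr_def sl_def by simp

lemma thr_meas[measurable]: "(\<lambda>t. thr K t i) \<in> borel_measurable (PM (K-1))"
  unfolding thr_sl by (cases "i = 0"; cases "K \<le> i") (auto intro!: sl_meas)

definition C :: "nat \<Rightarrow> (nat \<Rightarrow> real) \<Rightarrow> real \<Rightarrow> nat \<Rightarrow> bool" where
  "C K t x k \<longleftrightarrow> thr K t (k-1) \<le> x \<and> x < thr K t k"

lemma thr_mono_mid: "1 \<le> i \<Longrightarrow> i \<le> i' \<Longrightarrow> i' < K \<Longrightarrow> thr K t i \<le> thr K t i'"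
  unfolding thr_sl using sorted_nth_mono[OF sl_sorted, of "i-1" "i'-1" "K-1" t] by auto

lemma C_uniq:
  assumes "k \<in> {1..K}" "k' \<in> {1..K}" "C K t x k" "C K t x k'"
  shows "k = k'"
proof (rule ccontr)
  assume ne: "k \<noteq> k'"
  { fix k k' assume a: "k \<in> {1..K}" "k' \<in> {1..K}" "C K t x k" "C K t x k'" "k < k'"
    have "thr K t k \<le> thr K t (k'-1)" using a by (intro thr_mono_mid) auto
    then have False using a unfolding C_def by auto }
  then show False using assms ne by (metis linorder_neqE_nat)
qed

lemma encoder_C: "encoder K t x = (THE k. k \<in> {1..K} \<and> C K t x k)"
  unfolding encoder_def C_def by simp

lemma encoder_eq:
  "encoder K t x = a \<longleftrightarrow> (a \<in> {1..K} \<and> C K t x a) \<or> (a = (THE k::nat. False) \<and> (\<forall>j\<in>{1..K}. \<not> C K t x j))"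
proof (cases "\<exists>j\<in>{1..K}. C K t x j")
  case True
  then obtain j where j: "j \<in> {1..K}" "C K t x j" by blast
  have "encoder K t x = j" unfolding encoder_C
    by (rule the_equality) (use j C_uniq in auto)
  then show ?thesis using j C_uniq True by blast
next
  case False
  then have "(\<lambda>k. k \<in> {1..K} \<and> C K t x k) = (\<lambda>_. False)" by auto
  then have "encoder K t x = (THE k::nat. False)" unfolding encoder_C by simp
  then show ?thesis using False by auto
qed

lemma enc_meas: "(\<lambda>p. encoder K (snd p) (fst p)) \<in> measurable (unif01 \<Otimes>\<^sub>M PM (K-1)) (count_space UNIV)"
proof (subst measurable_count_space_eq2_countable, safe)
  fix a
  let ?M = "unif01 \<Otimes>\<^sub>M PM (K-1)"
  have "(\<lambda>p. encoder K (snd p) (fst p)) -` {a} \<inter> space ?M =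
     {p \<in> space ?M. (a \<in> {1..K} \<and> thr K (snd p) (a-1) \<le> fst p \<and> fst p < thr K (snd p) a) \<or>
        (a = (THE k::nat. False) \<and> (\<forall>j\<in>{1..K}. \<not> (thr K (snd p) (j-1) \<le> fst p \<and> fst p < thr K (snd p) j)))}"
    using encoder_eq[of K] unfolding C_def by blast
  also have "\<dots> \<in> sets ?M" by measurable
  finally show "(\<lambda>p. encoder K (snd p) (fst p)) -` {a} \<inter> space ?M \<in> sets ?M" .
qed simp

lemma integrand_meas:
  "(\<lambda>p. (fst p - decoder K (snd p) (encoder K (snd p) (fst p)))\<^sup>2) \<in> borel_measurable (unif01 \<Otimes>\<^sub>M PM (K-1))"
proof -
  have "(\<lambda>p. (\<lambda>k p. (fst p - decoder K (snd p) k)\<^sup>2) (encoder K (snd p) (fst p)) p) \<in> borel_measurable (unif01 \<Otimes>\<^sub>M PM (K-1))"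
    by (rule measurable_compose_countable[OF _ enc_meas]) (unfold decoder_def, measurable)
  then show ?thesis by simp
qed

primrec Lf :: "nat \<Rightarrow> real \<Rightarrow> (nat \<Rightarrow> real) \<Rightarrow> real" where
  "Lf 0 x t = 0"
| "Lf (Suc n) x t = (if t n \<le> x then max (Lf n x t) (t n) else Lf n x t)"

primrec Rf :: "nat \<Rightarrow> real \<Rightarrow> (nat \<Rightarrow> real) \<Rightarrow> real" where
  "Rf 0 x t = 1"
| "Rf (Suc n) x t = (if x < t n then min (Rf n x t) (t n) else Rf n x t)"

lemma Lf_prop: "(Lf n x t = 0 \<or> (\<exists>i<n. t i \<le> x \<and> Lf n x t = t i)) \<and> 0 \<le> Lf n x t \<and> (\<forall>i<n. t i \<le> x \<longrightarrow> t i \<le> Lf n x t)"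
proof (induction n)
  case 0 then show ?case by simp
next
  case (Suc n)
  then show ?case by (auto simp: max_def less_Suc_eq)
qed

lemma Rf_prop: "(Rf n x t = 1 \<or> (\<exists>i<n. x < t i \<and> Rf n x t = t i)) \<and> Rf n x t \<le> 1 \<and> (\<forall>i<n. x < t i \<longrightarrow> Rf n x t \<le> t i)"
proof (induction n)
  case 0 then show ?case by simp
next
  case (Suc n)
  then show ?case by (auto simp: min_def less_Suc_eq)
qed

lemma link:
  assumes K: "K \<ge> 1" and x: "0 \<le> x" "x < 1" and t: "\<forall>i<K-1. 0 \<le> t i \<and> t i < 1"
  shows "decoder K t (encoder K t x) = (Lf (K-1) x t + Rf (K-1) x t) / 2"
proof -
  define a where "a = thr K t"
  define n where "n = K - 1"
  have Kn: "K = Suc n" using K n_def by simp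
  have slin: "\<And>m. m < n \<Longrightarrow> \<exists>i<n. sl n t ! m = t i"
  proof -
    fix m assume "m < n"
    then have "sl n t ! m \<in> set (sl n t)" by simp
    then show "\<exists>i<n. sl n t ! m = t i" unfolding sl_set by auto
  qed
  have ain: "\<And>i. 1 \<le> i \<Longrightarrow> i < K \<Longrightarrow> \<exists>j<n. a i = t j"
    unfolding a_def thr_sl using slin Kn by (metis diff_less_mono le_refl less_one not_less n_def)
  have aval: "\<And>i. i < n \<Longrightarrow> \<exists>j. 1 \<le> j \<and> j < K \<and> t i = a j"
  proof -
    fix i assume "i < n"
    then have "t i \<in> set (sl n t)" unfolding sl_set by auto
    then obtain m where m: "m < n" "sl n t ! m = t i" by (metis in_set_conv_nth sl_len)
    show "\<exists>j. 1 \<le> j \<and> j < K \<and> t i = a j"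
      by (rule exI[of _ "Suc m"]) (use m Kn in \<open>auto simp: a_def thr_sl\<close>)
  qed
  have arange: "\<And>i. 0 \<le> a i \<and> a i \<le> 1"
  proof -
    fix i show "0 \<le> a i \<and> a i \<le> 1"
    proof (cases "1 \<le> i \<and> i < K")
      case True
      then obtain j where "j < n" "a i = t j" using ain by blast
      then show ?thesis using t n_def by force
    next
      case False
      then show ?thesis by (auto simp: a_def thr_sl)
    qed
  qed
  have amono: "\<And>i j. i \<le> j \<Longrightarrow> a i \<le> a j"
  proof -
    fix i j :: nat assume ij: "i \<le> j"
    show "a i \<le> a j"
    proof (cases "i = 0 \<or> K \<le> j")
      case True
      then show ?thesis using arange[of i] arange[of j] ij K
        by (auto simp: a_def thr_sl)
    next
      case False
      then show ?thesis unfolding a_def using thr_mono_mid[of i j K t] ij by auto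
    qed
  qed
  have aK: "a K = 1" and a0: "a 0 = 0" using K by (simp_all add: a_def thr_sl)
  define k0 where "k0 = (LEAST k. x < a k)"
  have xk0: "x < a k0" unfolding k0_def by (rule LeastI[of _ K]) (simp add: aK x)
  have k0K: "k0 \<le> K" unfolding k0_def by (rule Least_le) (simp add: aK x)
  have k0pos: "k0 \<noteq> 0" using xk0 a0 x by (metis not_less)
  have ak0m: "a (k0-1) \<le> x"
    using not_less_Least[of "k0-1" "\<lambda>k. x < a k"] k0pos unfolding k0_def by fastforce
  have Ck0: "C K t x k0" unfolding C_def using xk0 ak0m by (simp add: a_def)
  have enc: "encoder K t x = k0" using encoder_eq[of K t x k0] Ck0 k0pos k0K by auto
  have L: "Lf n x t = a (k0-1)"
  proof (rule antisym)
    show "Lf n x t \<le> a (k0-1)"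
    proof -
      have "Lf n x t = 0 \<or> (\<exists>i<n. t i \<le> x \<and> Lf n x t = t i)" using Lf_prop by blast
      then show ?thesis
      proof
        assume "Lf n x t = 0" then show ?thesis using arange by simp
      next
        assume "\<exists>i<n. t i \<le> x \<and> Lf n x t = t i"
        then obtain i where i: "i < n" "t i \<le> x" "Lf n x t = t i" by blast
        then obtain j where j: "t i = a j" using aval by blast
        have "\<not> k0 \<le> j" using amono[of k0 j] xk0 i j by auto
        then show ?thesis using amono[of j "k0-1"] i j by auto
      qed
    qed
  next
    show "a (k0-1) \<le> Lf n x t"
    proof (cases "k0 = 1")
      case True
      then show ?thesis using a0 Lf_prop by simp
    next
      case False
      have "1 \<le> k0-1" "k0-1 < K" using False k0pos k0K by auto
      then obtain j where "j < n" "a (k0-1) = t j" using ain[of "k0-1"] by blast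
      then show ?thesis using Lf_prop ak0m by metis
    qed
  qed
  have R: "Rf n x t = a k0"
  proof (rule antisym)
    show "a k0 \<le> Rf n x t"
    proof -
      have "Rf n x t = 1 \<or> (\<exists>i<n. x < t i \<and> Rf n x t = t i)" using Rf_prop by blast
      then show ?thesis
      proof
        assume "Rf n x t = 1" then show ?thesis using arange by simp
      next
        assume "\<exists>i<n. x < t i \<and> Rf n x t = t i"
        then obtain i where i: "i < n" "x < t i" "Rf n x t = t i" by blast
        then obtain j where j: "t i = a j" using aval by blast
        have "\<not> j \<le> k0 - 1" using amono[of j "k0-1"] ak0m i j by auto
        then show ?thesis using amono[of k0 j] i j by auto
      qed
    qed
  next
    show "Rf n x t \<le> a k0"
    proof (cases "k0 = K")
      case True
      then show ?thesis using aK Rf_prop by simp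
    next
      case False
      then obtain j where "j < n" "a k0 = t j" using ain[of k0] False k0pos k0K by auto
      then show ?thesis using Rf_prop xk0 by metis
    qed
  qed
  show ?thesis unfolding enc decoder_def using L R by (simp add: a_def n_def)
qed

lemma unif01_density: "unif01 = density lborel (\<lambda>x. ennreal (indicator {0..<1::real} x))"
  unfolding unif01_def uniform_measure_def by (simp add: ennreal_indicator divide_ennreal_def)

lemma AE_unif01: "AE x in unif01. 0 \<le> x \<and> x < 1"
  unfolding unif01_def by (rule AE_uniform_measureI) auto

lemma unif01_integral:
  fixes f :: "real \<Rightarrow> real"
  assumes fm[measurable]: "f \<in> borel_measurable borel" and hi: "(f has_integral I) {0..1}"
    and bd: "\<And>x. 0 \<le> x \<Longrightarrow> x \<le> 1 \<Longrightarrow> \<bar>f x\<bar> \<le> B"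
  shows "integral\<^sup>L unif01 f = I"
proof -
  have fm': "f \<in> borel_measurable unif01" using fm by (simp add: measurable_cong_sets[OF sets_unif01 refl])
  have "integrable unif01 f"
  proof (rule U.integrable_const_bound[where B=B])
    show "AE x in unif01. norm (f x) \<le> B" using AE_unif01 by eventually_elim (use bd in auto)
  qed (rule fm')
  then have int: "integrable lborel (\<lambda>x. indicator {0..<1::real} x *\<^sub>R f x)"
    unfolding unif01_density by (subst (asm) integrable_density) auto
  have "integral\<^sup>L unif01 f = integral\<^sup>L lborel (\<lambda>x. indicator {0..<1::real} x *\<^sub>R f x)"
    unfolding unif01_density by (subst integral_density) auto
  also have "\<dots> = (LINT x : {0..<1} | lborel. f x)"
    by (simp add: set_lebesgue_integral_def)
  also have "\<dots> = integral {0..<1} f"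
    by (rule set_borel_integral_eq_integral) (use int in \<open>simp add: set_integrable_def\<close>)
  also have "\<dots> = I"
  proof -
    have "(f has_integral I) {0..<1}"
      using hi by (subst has_integral_spike_set_eq[where T="{0..1}"])
        (auto intro: negligible_subset[OF negligible_sing[of 1]])
    then show ?thesis by (rule integral_unique)
  qed
  finally show ?thesis .
qed

lemma ftc_poly:
  fixes F f :: "real \<Rightarrow> real"
  assumes "p \<le> q" "\<And>s. (F has_real_derivative f s) (at s)"
  shows "(f has_integral (F q - F p)) {p..q}"
  using assms by (intro fundamental_theorem_of_calculus)
    (auto simp: has_real_derivative_iff_has_vector_derivative[symmetric] intro: has_field_derivative_at_within)

lemma deriv_aux: "((\<lambda>y. (- Cc / real (Suc a)) * (x-y)^(Suc a)) has_real_derivative (x-s)^a*(Cc::real)) (at s)"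
proof -
  have d: "((\<lambda>y. x - y) has_real_derivative -1) (at s)" by (auto intro!: derivative_eq_intros)
  have "((\<lambda>y. (x-y)^(Suc a)) has_real_derivative (Suc a)*(x-s)^a * (-1)) (at s)"
    using DERIV_power[OF d, of "Suc a"] by (simp add: mult.commute mult.left_commute)
  note h = DERIV_cmult[OF this, of "- Cc / real (Suc a)"]
  have eq: "(- Cc / real (Suc a)) * ((Suc a)*(x-s)^a * (-1)) = (x-s)^a*Cc"
    by (simp add: field_simps)
  show ?thesis by (subst eq[symmetric]) (rule h)
qed

lemma deriv_aux2: "((\<lambda>y. (Cc / real (Suc b)) * (y-x)^(Suc b)) has_real_derivative (s-x)^b*(Cc::real)) (at s)"
proof -
  have d: "((\<lambda>y. y - x) has_real_derivative 1) (at s)" by (auto intro!: derivative_eq_intros)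
  have "((\<lambda>y. (y-x)^(Suc b)) has_real_derivative (Suc b)*(s-x)^b * 1) (at s)"
    using DERIV_power[OF d, of "Suc b"] by (simp add: mult.commute mult.left_commute)
  note h = DERIV_cmult[OF this, of "Cc / real (Suc b)"]
  have eq: "(Cc / real (Suc b)) * ((Suc b)*(s-x)^b * 1) = (s-x)^b*Cc"
    by (simp add: field_simps)
  show ?thesis by (subst eq[symmetric]) (rule h)
qed

lemma step1d:
  fixes L R x :: real
  assumes "0 \<le> L" "L \<le> x" "x < R" "R \<le> 1"
  shows "(\<integral>s. (x - (if s \<le> x then max L s else L))^a * ((if x < s then min R s else R) - x)^b \<partial>unif01)
    = (x-L)^(a+1)*(R-x)^b/(a+1) + (x-L)^a*(R-x)^(b+1)/(b+1) + (x-L)^a*(R-x)^b*(1-(x-L)-(R-x))"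
proof -
  define f where "f s = (x - (if s \<le> x then max L s else L))^a * ((if x < s then min R s else R) - x)^b" for s
  define c where "c = (x-L)^a*(R-x)^b"
  define Ca where "Ca = (x-L)^a"
  define Cb where "Cb = (R-x)^b"
  have p1: "(f has_integral (c*L - c*0)) {0..L}"
  proof (rule has_integral_spike_finite[where S="{}"])
    show "((\<lambda>s. c) has_integral (c*L - c*0)) {0..L}"
      by (rule ftc_poly[where F="\<lambda>y. c * y"]) (use assms in \<open>auto intro!: derivative_eq_intros\<close>)
  qed (use assms in \<open>auto simp: f_def c_def max_def\<close>)
  have p2: "(f has_integral ((x-L)^(a+1)/(a+1)*(R-x)^b)) {L..x}"
  proof (rule has_integral_spike_finite[where S="{}"])
    have "((\<lambda>y. (x-y)^a*(R-x)^b) has_integral ((\<lambda>y. (- Cb / real (Suc a)) * (x-y)^(Suc a)) x - (\<lambda>y. (- Cb / real (Suc a)) * (x-y)^(Suc a)) L)) {L..x}"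
      by (rule ftc_poly[of L x "\<lambda>y. (- Cb / real (Suc a)) * (x-y)^(Suc a)"])
         (use assms deriv_aux[of Cb a x] in \<open>auto simp: Cb_def\<close>)
    then show "((\<lambda>y. (x-y)^a*(R-x)^b) has_integral ((x-L)^(a+1)/(a+1)*(R-x)^b)) {L..x}" by (simp add: field_simps Cb_def)
  qed (use assms in \<open>auto simp: f_def max_def\<close>)
  have p3: "(f has_integral ((x-L)^a*(R-x)^(b+1)/(b+1))) {x..R}"
  proof (rule has_integral_spike_finite[where S="{x}"])
    have "((\<lambda>y. (x-L)^a*(y-x)^b) has_integral ((\<lambda>y. (Ca / real (Suc b)) * (y-x)^(Suc b)) R - (\<lambda>y. (Ca / real (Suc b)) * (y-x)^(Suc b)) x)) {x..R}"
      by (rule ftc_poly[of x R "\<lambda>y. (Ca / real (Suc b)) * (y-x)^(Suc b)"])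
         (use assms deriv_aux2[of Ca b x] in \<open>auto simp: Ca_def mult.commute\<close>)
    then show "((\<lambda>y. (x-L)^a*(y-x)^b) has_integral ((x-L)^a*(R-x)^(b+1)/(b+1))) {x..R}" by (simp add: field_simps Ca_def)
  qed (use assms in \<open>auto simp: f_def min_def\<close>)
  have p4: "(f has_integral (c*1 - c*R)) {R..1}"
  proof (rule has_integral_spike_finite[where S="{}"])
    show "((\<lambda>s. c) has_integral (c*1 - c*R)) {R..1}"
      by (rule ftc_poly[where F="\<lambda>y. c * y"]) (use assms in \<open>auto intro!: derivative_eq_intros\<close>)
  qed (use assms in \<open>auto simp: f_def c_def min_def\<close>)
  have all: "(f has_integral ((c*L - c*0) + ((x-L)^(a+1)/(a+1)*(R-x)^b)
     + ((x-L)^a*(R-x)^(b+1)/(b+1)) + (c*1 - c*R))) {0..1}"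
    using assms
    by (intro has_integral_combine[OF _ _ _ p4] has_integral_combine[OF _ _ _ p3]
          has_integral_combine[OF _ _ p1 p2]) auto
  have "(\<integral>s. f s \<partial>unif01) = (c*L - c*0) + ((x-L)^(a+1)/(a+1)*(R-x)^b)
     + ((x-L)^a*(R-x)^(b+1)/(b+1)) + (c*1 - c*R)"
  proof (rule unif01_integral[OF _ all, where B=1])
    show "f \<in> borel_measurable borel" unfolding f_def by measurable
    fix s :: real assume s: "0 \<le> s" "s \<le> 1"
    have u: "0 \<le> x - (if s \<le> x then max L s else L) \<and> x - (if s \<le> x then max L s else L) \<le> 1"
      using assms s by auto
    have v: "0 \<le> (if x < s then min R s else R) - x \<and> (if x < s then min R s else R) - x \<le> 1"
      using assms s by auto
    show "\<bar>f s\<bar> \<le> 1" unfolding f_def using u v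
      by (simp add: abs_mult power_le_one mult_le_one zero_le_power)
  qed
  also have "\<dots> = (x-L)^(a+1)*(R-x)^b/(a+1) + (x-L)^a*(R-x)^(b+1)/(b+1) + (x-L)^a*(R-x)^b*(1-(x-L)-(R-x))"
  proof -
    have e: "1-(x-L)-(R-x) = 1 + L - R" by simp
    show ?thesis unfolding e c_def by (simp add: algebra_simps)
  qed
  finally show ?thesis unfolding f_def .
qed

lemma pair_ps: "pair_prob_space unif01 (PM n)"
  by (simp add: pair_prob_space_def pair_sigma_finite_def prob_unif01 prob_PM prob_space_imp_sigma_finite)

lemma fst_meas[measurable]: "(\<lambda>p. fst p) \<in> borel_measurable (unif01 \<Otimes>\<^sub>M PM N)"
  using measurable_fst[of unif01 "PM N"] by (simp add: measurable_cong_sets[OF refl sets_unif01])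

lemma snd_comp_meas: "i < N \<Longrightarrow> (\<lambda>p. snd p i) \<in> borel_measurable (unif01 \<Otimes>\<^sub>M PM N)"
  by (rule measurable_compose[OF measurable_snd comp_meas])

lemma Lf_meas: "n \<le> N \<Longrightarrow> (\<lambda>p. Lf n (fst p) (snd p)) \<in> borel_measurable (unif01 \<Otimes>\<^sub>M PM N)"
proof (induction n)
  case 0 then show ?case by simp
next
  case (Suc n)
  note [measurable] = snd_comp_meas[of n N]
  have [measurable]: "(\<lambda>p. Lf n (fst p) (snd p)) \<in> borel_measurable (unif01 \<Otimes>\<^sub>M PM N)" using Suc by simp
  show ?case using Suc.prems by simp measurable
qed

lemma Rf_meas: "n \<le> N \<Longrightarrow> (\<lambda>p. Rf n (fst p) (snd p)) \<in> borel_measurable (unif01 \<Otimes>\<^sub>M PM N)"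
proof (induction n)
  case 0 then show ?case by simp
next
  case (Suc n)
  note [measurable] = snd_comp_meas[of n N]
  have [measurable]: "(\<lambda>p. Rf n (fst p) (snd p)) \<in> borel_measurable (unif01 \<Otimes>\<^sub>M PM N)" using Suc by simp
  show ?case using Suc.prems by simp measurable
qed

lemma Lf_meas_x: "n \<le> N \<Longrightarrow> (\<lambda>t. Lf n x t) \<in> borel_measurable (PM N)"
proof (induction n)
  case 0 then show ?case by simp
next
  case (Suc n)
  note [measurable] = comp_meas[of n N]
  have [measurable]: "(\<lambda>t. Lf n x t) \<in> borel_measurable (PM N)" using Suc by simp
  show ?case using Suc.prems by simp measurable
qed

lemma Rf_meas_x: "n \<le> N \<Longrightarrow> (\<lambda>t. Rf n x t) \<in> borel_measurable (PM N)"
proof (induction n)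
  case 0 then show ?case by simp
next
  case (Suc n)
  note [measurable] = comp_meas[of n N]
  have [measurable]: "(\<lambda>t. Rf n x t) \<in> borel_measurable (PM N)" using Suc by simp
  show ?case using Suc.prems by simp measurable
qed

lemma LR_bounds:
  assumes "0 \<le> x" "x < 1"
  shows "0 \<le> Lf n x t \<and> Lf n x t \<le> x \<and> x < Rf n x t \<and> Rf n x t \<le> 1"
  using Lf_prop[of n x t] Rf_prop[of n x t] assms by auto

lemma Lf_upd: "m \<le> n \<Longrightarrow> Lf m x (t(n:=s)) = Lf m x t"
  by (induction m) auto
lemma Rf_upd: "m \<le> n \<Longrightarrow> Rf m x (t(n:=s)) = Rf m x t"
  by (induction m) auto

definition G :: "nat \<Rightarrow> nat \<Rightarrow> nat \<Rightarrow> real \<times> (nat \<Rightarrow> real) \<Rightarrow> real" where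
  "G n a b p = (fst p - Lf n (fst p) (snd p))^a * (Rf n (fst p) (snd p) - fst p)^b"

lemma G_meas: "n \<le> N \<Longrightarrow> G n a b \<in> borel_measurable (unif01 \<Otimes>\<^sub>M PM N)"
proof -
  assume n: "n \<le> N"
  note [measurable] = Lf_meas[OF n] Rf_meas[OF n]
  show ?thesis unfolding G_def by measurable
qed

lemma G_meas_x: "n \<le> N \<Longrightarrow> (\<lambda>t. G n a b (x,t)) \<in> borel_measurable (PM N)"
proof -
  assume n: "n \<le> N"
  note [measurable] = Lf_meas_x[OF n] Rf_meas_x[OF n]
  show ?thesis unfolding G_def by simp measurable
qed

lemma G_bound: "0 \<le> x \<Longrightarrow> x < 1 \<Longrightarrow> \<bar>G n a b (x,t)\<bar> \<le> 1"
  using LR_bounds[of x n t] unfolding G_def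
  by (simp add: abs_mult power_le_one mult_le_one zero_le_power)

lemma AE_pair_fst: "AE p in unif01 \<Otimes>\<^sub>M PM N. 0 \<le> fst p \<and> fst p < 1"
proof -
  interpret Q: pair_prob_space unif01 "PM N" by (rule pair_ps)
  show ?thesis
  proof (rule Q.AE_pair_measure)
    show "{x \<in> space (unif01 \<Otimes>\<^sub>M PM N). 0 \<le> fst x \<and> fst x < 1} \<in> sets (unif01 \<Otimes>\<^sub>M PM N)"
      by measurable
    show "AE x in unif01. AE y in PM N. 0 \<le> fst (x, y) \<and> fst (x, y) < 1"
      using AE_unif01 by eventually_elim auto
  qed
qed

lemma G_int: "n \<le> N \<Longrightarrow> integrable (unif01 \<Otimes>\<^sub>M PM N) (G n a b)"
proof -
  assume n: "n \<le> N"
  interpret Q: pair_prob_space unif01 "PM N" by (rule pair_ps)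
  show ?thesis
  proof (rule Q.integrable_const_bound[where B=1])
    show "AE x in unif01 \<Otimes>\<^sub>M PM N. norm (G n a b x) \<le> 1"
      using AE_pair_fst by eventually_elim (use G_bound in \<open>auto simp: prod_eq_iff\<close>)
  qed (rule G_meas[OF n])
qed

lemma alg1:
  fixes u v :: real
  shows "u^(a+1) * v^b/(a+1) + u^a * v^(b+1)/(b+1) + u^a * v^b * (1-u-v)
       = u^a * v^b + (1/(a+1)-1) * (u^(a+1) * v^b) + (1/(b+1)-1) * (u^a * v^(b+1))"
proof -
  have "u^(a+1) * v^b/(a+1) + u^a * v^(b+1)/(b+1) + u^a * v^b * (1-u-v)
       = u * (u^a * v^b)/(a+1) + v * (u^a * v^b)/(b+1) + u^a * v^b * (1-u-v)" by (simp add: mult_ac)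
  also have "\<dots> = u^a * v^b + (1/(a+1)-1) * (u * (u^a * v^b)) + (1/(b+1)-1) * (v * (u^a * v^b))"
    by (simp add: algebra_simps)
  also have "\<dots> = u^a * v^b + (1/(a+1)-1) * (u^(a+1) * v^b) + (1/(b+1)-1) * (u^a * v^(b+1))" by simp
  finally show ?thesis by (simp add: ac_simps)
qed

definition Mo :: "nat \<Rightarrow> nat \<Rightarrow> nat \<Rightarrow> real" where
  "Mo n a b = integral\<^sup>L (unif01 \<Otimes>\<^sub>M PM n) (G n a b)"

definition H :: "nat \<Rightarrow> nat \<Rightarrow> nat \<Rightarrow> real \<times> (nat \<Rightarrow> real) \<Rightarrow> real" where
  "H n a b p = G n a b p + (1/(a+1)-1) * G n (a+1) b p + (1/(b+1)-1) * G n a (b+1) p"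

lemma inner_step:
  assumes x: "0 \<le> x" "x < 1"
  shows "(\<integral>t. G (Suc n) a b (x,t) \<partial>PM (Suc n)) = (\<integral>t. H n a b (x,t) \<partial>PM n)"
proof -
  interpret P1: prob_space "PM (Suc n)" by (rule prob_PM)
  have eqPM: "PM (Suc n) = Pi\<^sub>M (insert n {..<n}) (\<lambda>_. unif01)" by (simp add: lessThan_Suc)
  have int: "integrable (PM (Suc n)) (\<lambda>t. G (Suc n) a b (x,t))"
    by (rule P1.integrable_const_bound[where B=1]) (use G_bound[OF x] G_meas_x[of "Suc n" "Suc n"] in auto)
  have "(\<integral>t. G (Suc n) a b (x,t) \<partial>PM (Suc n)) = (\<integral>t. (\<integral>s. G (Suc n) a b (x, t(n:=s)) \<partial>unif01) \<partial>PM n)"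
    unfolding eqPM by (rule PP.product_integral_insert) (use int eqPM in auto)
  also have "\<dots> = (\<integral>t. H n a b (x,t) \<partial>PM n)"
  proof (rule Bochner_Integration.integral_cong[OF refl])
    fix t assume "t \<in> space (PM n)"
    have b: "0 \<le> Lf n x t" "Lf n x t \<le> x" "x < Rf n x t" "Rf n x t \<le> 1" using LR_bounds[OF x] by auto
    have "(\<integral>s. G (Suc n) a b (x, t(n:=s)) \<partial>unif01) =
       (\<integral>s. (x - (if s \<le> x then max (Lf n x t) s else Lf n x t))^a * ((if x < s then min (Rf n x t) s else Rf n x t) - x)^b \<partial>unif01)"
      by (rule Bochner_Integration.integral_cong[OF refl]) (simp add: G_def Lf_upd Rf_upd)
    also have "\<dots> = H n a b (x,t)"
      unfolding step1d[OF b] H_def G_def fst_conv snd_conv using alg1[of "x - Lf n x t" a "Rf n x t - x" b] by (simp add: add.commute)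
    finally show "(\<integral>s. G (Suc n) a b (x, t(n:=s)) \<partial>unif01) = H n a b (x,t)" .
  qed
  finally show ?thesis .
qed

lemma H_int: "integrable (unif01 \<Otimes>\<^sub>M PM n) (H n a b)"
  unfolding H_def[abs_def] by (intro Bochner_Integration.integrable_add integrable_mult_right) (use G_int[of n n] in auto)

lemma Mo_step: "Mo (Suc n) a b = Mo n a b + (1/(a+1)-1) * Mo n (a+1) b + (1/(b+1)-1) * Mo n a (b+1)"
proof -
  interpret Q1: pair_prob_space unif01 "PM (Suc n)" by (rule pair_ps)
  interpret Q0: pair_prob_space unif01 "PM n" by (rule pair_ps)
  have m1: "(\<lambda>x. \<integral>t. G (Suc n) a b (x,t) \<partial>PM (Suc n)) \<in> borel_measurable unif01"
    by (rule Q1.M2.borel_measurable_lebesgue_integral) (use G_meas[of "Suc n" "Suc n" a b] in simp)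
  have m0: "(\<lambda>x. \<integral>t. H n a b (x,t) \<partial>PM n) \<in> borel_measurable unif01"
    by (rule Q0.M2.borel_measurable_lebesgue_integral) (use H_int[of n a b] in simp)
  have "Mo (Suc n) a b = (\<integral>x. \<integral>t. G (Suc n) a b (x,t) \<partial>PM (Suc n) \<partial>unif01)"
    unfolding Mo_def by (rule Q1.integral_fst'[symmetric]) (rule G_int, simp)
  also have "\<dots> = (\<integral>x. \<integral>t. H n a b (x,t) \<partial>PM n \<partial>unif01)"
    by (rule integral_cong_AE[OF m1 m0]) (use AE_unif01 in \<open>eventually_elim, use inner_step in auto\<close>)
  also have "\<dots> = integral\<^sup>L (unif01 \<Otimes>\<^sub>M PM n) (H n a b)"
    by (rule Q0.integral_fst') (rule H_int)
  also have "\<dots> = Mo n a b + (1/(a+1)-1) * Mo n (a+1) b + (1/(b+1)-1) * Mo n a (b+1)"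
    unfolding H_def[abs_def] Mo_def using G_int[of n n] by (simp add: ac_simps)
  finally show ?thesis by (simp add: add.commute)
qed

definition Bt :: "nat \<Rightarrow> nat \<Rightarrow> real" where
  "Bt a b = (\<integral>x. x^a * (1-x)^b \<partial>unif01)"

lemma Bt_int: "integrable unif01 (\<lambda>x. x^a * (1-x)^b)"
proof (rule U.integrable_const_bound[where B=1])
  show "AE x in unif01. norm (x^a * (1-x)^b) \<le> 1"
    using AE_unif01 by eventually_elim (auto simp: abs_mult power_le_one mult_le_one zero_le_power)
qed (simp add: measurable_cong_sets[OF sets_unif01 refl])

lemma Bt0: "Bt a 0 = 1 / (a+1)"
proof -
  have "((\<lambda>s. (s-0)^a*1) has_integral ((\<lambda>y. (1/real(Suc a)) * (y-0)^(Suc a)) 1 - (\<lambda>y. (1/real(Suc a)) * (y-0)^(Suc a)) 0)) {0..1}"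
    by (rule ftc_poly[of 0 1 "\<lambda>y. (1/real(Suc a)) * (y-0)^(Suc a)"]) (use deriv_aux2[of 1 a 0] in auto)
  then have h: "((\<lambda>x. x^a) has_integral 1/(a+1)) {0..1}" by (simp add: add.commute)
  have "(\<integral>x. x^a \<partial>unif01) = 1/(a+1)"
    by (rule unif01_integral[OF _ h, where B=1]) (auto simp: power_le_one)
  then show ?thesis unfolding Bt_def by simp
qed

lemma Bt_Suc: "Bt a (Suc b) = Bt a b - Bt (Suc a) b"
proof -
  have "Bt a (Suc b) = (\<integral>x. x^a * (1-x)^b - x^(Suc a) * (1-x)^b \<partial>unif01)"
    unfolding Bt_def by (rule Bochner_Integration.integral_cong[OF refl]) (simp add: algebra_simps)
  also have "\<dots> = Bt a b - Bt (Suc a) b"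
    unfolding Bt_def using Bt_int[of a b] Bt_int[of "Suc a" b] by simp
  finally show ?thesis .
qed

lemma alg2:
  fixes A B N p q r D :: real
  assumes "0 \<le> A" "0 \<le> B" "0 \<le> N" "D \<noteq> 0"
  shows "p*q*r/D + (1/(A+1)-1)*((A+1)*p*q*r/((A+B+N+2)*D)) + (1/(B+1)-1)*(p*((B+1)*q)*r/((A+B+N+2)*D))
     = p*q*((N+2)*r)/((A+B+N+2)*D)"
proof -
  have nz: "A+1 \<noteq> 0" "B+1 \<noteq> 0" "A+B+N+2 \<noteq> 0" using assms by linarith+
  define M where "M = (A+B+N+2)*D"
  define X where "X = p*q*r"
  have a1: "(1/(A+1)-1)*(A+1) = -A" using nz by (simp add: field_simps)
  have b1: "(1/(B+1)-1)*(B+1) = -B" using nz by (simp add: field_simps)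
  have t1: "p*q*r/D = (A+B+N+2)*X/M" using nz assms by (simp add: M_def X_def)
  have t2: "(1/(A+1)-1)*((A+1)*p*q*r/((A+B+N+2)*D)) = ((1/(A+1)-1)*(A+1))*X/M"
    by (simp add: M_def X_def mult.assoc)
  have t3: "(1/(B+1)-1)*(p*((B+1)*q)*r/((A+B+N+2)*D)) = ((1/(B+1)-1)*(B+1))*X/M"
    by (simp add: M_def X_def mult_ac)
  have t4: "p*q*((N+2)*r)/((A+B+N+2)*D) = (N+2)*X/M" by (simp add: M_def X_def mult_ac)
  show ?thesis unfolding t1 t2 t3 t4 a1 b1
    by (simp add: add_divide_distrib[symmetric] diff_divide_distrib[symmetric] algebra_simps)
qed

lemma alg3:
  fixes A B p q D :: real
  assumes "0 \<le> A" "0 \<le> B" "D \<noteq> 0"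
  shows "p*q/D - ((A+1)*p)*q/((A+B+2)*D) = p*((B+1)*q)/((A+B+2)*D)"
proof -
  have nz: "A+B+2 \<noteq> 0" using assms by linarith
  define M where "M = (A+B+2)*D"
  define X where "X = p*q"
  have t1: "p*q/D = (A+B+2)*X/M" using nz assms by (simp add: M_def X_def)
  have t2: "((A+1)*p)*q/((A+B+2)*D) = (A+1)*X/M" by (simp add: M_def X_def mult_ac)
  have t3: "p*((B+1)*q)/((A+B+2)*D) = (B+1)*X/M" by (simp add: M_def X_def mult_ac)
  show ?thesis unfolding t1 t2 t3
    by (simp add: diff_divide_distrib[symmetric] algebra_simps)
qed

lemma Bt_closed: "Bt a b = fact a * fact b / fact (a+b+1)"
proof (induction b arbitrary: a)
  case 0
  then show ?case by (simp add: Bt0 add.commute)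
next
  case (Suc b)
  have f1: "(fact (Suc a + b + 1)::real) = (real a + real b + 2) * fact (a+b+1)" by (simp add: algebra_simps)
  have f2: "(fact (a + Suc b + 1)::real) = (real a + real b + 2) * fact (a+b+1)" by (simp add: algebra_simps)
  have f3: "(fact (Suc a)::real) = (real a + 1) * fact a" by (simp add: algebra_simps)
  have f4: "(fact (Suc b)::real) = (real b + 1) * fact b" by (simp add: algebra_simps)
  show ?case unfolding Bt_Suc Suc f1 f2 f3 f4
    by (rule alg3) simp_all
qed

lemma Mo0: "Mo 0 a b = Bt a b"
proof -
  interpret Q: pair_prob_space unif01 "PM 0" by (rule pair_ps)
  have "Mo 0 a b = (\<integral>x. \<integral>t. G 0 a b (x,t) \<partial>PM 0 \<partial>unif01)"
    unfolding Mo_def by (rule Q.integral_fst'[symmetric]) (rule G_int, simp)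
  also have "\<dots> = Bt a b"
    unfolding Bt_def G_def by (simp add: prob_space.prob_space[OF prob_PM])
  finally show ?thesis .
qed

lemma Mo_closed: "Mo n a b = fact a * fact b * fact (n+1) / fact (a+b+n+1)"
proof (induction n arbitrary: a b)
  case 0
  then show ?case by (simp add: Mo0 Bt_closed)
next
  case (Suc n)
  have f1: "(fact (a+1+b+n+1)::real) = (real a + real b + real n + 2) * fact (a+b+n+1)" by (simp add: algebra_simps)
  have f2: "(fact (a+(b+1)+n+1)::real) = (real a + real b + real n + 2) * fact (a+b+n+1)" by (simp add: algebra_simps)
  have f3: "(fact (a+1)::real) = (real a + 1) * fact a" by (simp add: algebra_simps)
  have f4: "(fact (b+1)::real) = (real b + 1) * fact b" by (simp add: algebra_simps)
  have f5: "(fact (Suc n + 1)::real) = (real n + 2) * fact (n+1)" by (simp add: algebra_simps)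
  have f6: "(fact (a+b+Suc n+1)::real) = (real a + real b + real n + 2) * fact (a+b+n+1)" by (simp add: algebra_simps)
  show ?case unfolding Mo_step Suc.IH f1 f2 f3 f4 f5 f6
    by (rule alg2) simp_all
qed

lemma alg4:
  fixes F :: real
  assumes "F \<noteq> 0"
  shows "(2 * F / ((real n + 3) * (real n + 2) * F) - 2 * (F / ((real n + 3) * (real n + 2) * F))
     + 2 * F / ((real n + 3) * (real n + 2) * F)) / 4 = 1 / (2 * (real (Suc n) + 1) * (real (Suc n) + 2))"
proof -
  have r: "F / ((real n + 3) * (real n + 2) * F) = 1 / ((real n + 3) * (real n + 2))"
    using assms by simp
  have r2: "2 * F / ((real n + 3) * (real n + 2) * F) = 2 * (F / ((real n + 3) * (real n + 2) * F))"
    by simp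
  define D where "D = (real n + 3) * (real n + 2)"
  have Dp: "D \<noteq> 0" unfolding D_def by (simp add: add_pos_pos)
  have e: "2 * (real (Suc n) + 1) * (real (Suc n) + 2) = 2 * D" unfolding D_def by (simp add: algebra_simps)
  show ?thesis unfolding r2 r e unfolding D_def[symmetric] using Dp by (simp add: field_simps)
qed

theorem theorem1:
  fixes K :: nat
  assumes "K \<ge> 1"
  shows "(\<integral>p. (fst p - decoder K (snd p) (encoder K (snd p) (fst p)))\<^sup>2
            \<partial>(unif01 \<Otimes>\<^sub>M (\<Pi>\<^sub>M i\<in>{..<K-1}. unif01)))
         = 1 / (2 * (real K + 1) * (real K + 2))"
proof -
  interpret Q: pair_prob_space unif01 "PM (K-1)" by (rule pair_ps)
  let ?M = "unif01 \<Otimes>\<^sub>M PM (K-1)"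
  have aei: "AE p in ?M. 0 \<le> snd p i \<and> snd p i < 1" if i: "i \<in> {..<K-1}" for i
  proof (rule Q.AE_pair_measure)
    note [measurable] = snd_comp_meas[of i "K-1"]
    show "{x \<in> space ?M. 0 \<le> snd x i \<and> snd x i < 1} \<in> sets ?M" using i by measurable
    show "AE x in unif01. AE y in PM (K-1). 0 \<le> snd (x, y) i \<and> snd (x, y) i < 1"
      by (rule AE_I2) (use AE_PiM_component[of "{..<K-1}" "\<lambda>_. unif01" i "\<lambda>y. 0 \<le> y \<and> y < 1"] prob_unif01 i AE_unif01 in auto)
  qed
  have ae: "AE p in ?M. 0 \<le> fst p \<and> fst p < 1 \<and> (\<forall>i\<in>{..<K-1}. 0 \<le> snd p i \<and> snd p i < 1)"
  proof -
    have ae2: "AE p in ?M. \<forall>i\<in>{..<K-1}. 0 \<le> snd p i \<and> snd p i < 1"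
      by (rule AE_finite_allI) (simp, rule aei)
    show ?thesis using AE_pair_fst[of "K-1"] ae2 by eventually_elim auto
  qed
  let ?n = "K - 1"
  have eq: "AE p in ?M. (fst p - decoder K (snd p) (encoder K (snd p) (fst p)))\<^sup>2
     = (G ?n 2 0 p - 2 * G ?n 1 1 p + G ?n 0 2 p) / 4"
    using ae
  proof eventually_elim
    case (elim p)
    have d: "decoder K (snd p) (encoder K (snd p) (fst p)) = (Lf ?n (fst p) (snd p) + Rf ?n (fst p) (snd p)) / 2"
      by (rule link) (use assms elim in auto)
    show ?case unfolding d G_def by (simp add: power2_eq_square field_simps)
  qed
  have "(\<integral>p. (fst p - decoder K (snd p) (encoder K (snd p) (fst p)))\<^sup>2 \<partial>?M)
     = (\<integral>p. (G ?n 2 0 p - 2 * G ?n 1 1 p + G ?n 0 2 p) / 4 \<partial>?M)"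
    by (rule integral_cong_AE[OF integrand_meas _ eq]) (use G_meas[of ?n ?n] in simp)
  also have "\<dots> = (Mo ?n 2 0 - 2 * Mo ?n 1 1 + Mo ?n 0 2) / 4"
    unfolding Mo_def using G_int[of ?n ?n] by simp
  also have "\<dots> = 1 / (2 * (real K + 1) * (real K + 2))"
  proof -
    obtain n where n: "K = Suc n" using assms by (cases K) auto
    have f: "(fact (Suc (Suc (Suc n)))::real) = (real n + 3) * (real n + 2) * fact (Suc n)"
      by (simp add: algebra_simps)
    have m1: "Mo n 2 0 = 2 * fact (Suc n) / fact (Suc (Suc (Suc n)))"
      unfolding Mo_closed by (simp add: numeral_2_eq_2)
    have m2: "Mo n 1 1 = fact (Suc n) / fact (Suc (Suc (Suc n)))"
      unfolding Mo_closed by simp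
    have m3: "Mo n 0 2 = 2 * fact (Suc n) / fact (Suc (Suc (Suc n)))"
      unfolding Mo_closed by (simp add: numeral_2_eq_2)
    have nz: "(fact (Suc n)::real) \<noteq> 0" "real n + 2 \<noteq> 0" "real n + 3 \<noteq> 0" by auto
    show ?thesis unfolding n by (simp only: diff_Suc_1 m1 m2 m3 f) (rule alg4, simp)
  qed
  finally show ?thesis .
qed

end
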